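(* Let $k$ be a field of characteristic $p>0$. Let $\mathfrak{a}$ be a finite-dimensional restricted Lie algebra over $k$ with trivial Lie bracket $[a,a']=0$ and trivial $p$-map $a^{[p]}=0$, and let $\mathfrak{b}=ke$ be the one-dimensional restricted Lie algebra with $p$-map $(\lambda e)^{[p]}=\lambda^p e$. On the vector space $\mathfrak{g}=\mathfrak{a}\oplus\mathfrak{b}$ define the Lie bracket $[a+\lambda e,a'+\lambda' e]=\lambda a'-\lambda' a$ (the semidirect product $\mathfrak{a}\rtimes\mathfrak{b}$ for the homomorphism $\mathfrak{b}\to\mathfrak{gl}(\mathfrak{a})$, $e\mapsto \mathrm{id}_{\mathfrak{a}}$) and the map $(a+\lambda e)^{[p]}=\lambda^{p-1}(a+\lambda e)$ for $a,a'\in\mathfrak{a}$, $\lambda,\lambda'\in k$. Then this map is a $p$-map making $\mathfrak{g}$ a restricted Lie algebra such that the inclusions of $\mathfrak{a}$ and $\mathfrak{b}$ are homomorphisms of restricted Lie algebras; it is the unique $p$-map on the Lie algebra $\mathfrak{g}$ with this property; and every nonzero vector of $\mathfrak{g}$ is $p$-closed.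
   Context: A restricted Lie algebra over $k$ is a Lie algebra $\mathfrak{g}$ with a map $x\mapsto x^{[p]}$ satisfying $(\lambda x)^{[p]}=\lambda^p x^{[p]}$, $[x^{[p]},y]=(\mathrm{ad}_x)^p(y)$ and $(x+y)^{[p]}=x^{[p]}+y^{[p]}+\sum_{r=1}^{p-1}s_r(x,y)$, where $s_r$ are the usual universal Lie polynomials (Jacobson's formula). A vector $x\in\mathfrak{g}$ is called $p$-closed if $x\neq 0$ and $x^{[p]}\in kx$. *)

theory Defs
  imports Complex_Main "HOL-Library.Product_Plus"
begin

definition lie_algebra :: "('k::field \<Rightarrow> 'g::ab_group_add \<Rightarrow> 'g) \<Rightarrow> ('g \<Rightarrow> 'g \<Rightarrow> 'g) \<Rightarrow> bool" where
  "lie_algebra sc br \<longleftrightarrow>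
     vector_space sc \<and>
     (\<forall>x y z. br (x + y) z = br x z + br y z) \<and>
     (\<forall>x y z. br x (y + z) = br x y + br x z) \<and>
     (\<forall>c x y. br (sc c x) y = sc c (br x y)) \<and>
     (\<forall>c x y. br x (sc c y) = sc c (br x y)) \<and>
     (\<forall>x. br x x = 0) \<and>
     (\<forall>x y z. br x (br y z) + br y (br z x) + br z (br x y) = 0)"

text \<open>Jacobson's universal Lie polynomials: r * s_r(x,y) is the coefficient of t^(r-1)
in ad(t x + y)^(p-1)(x).  Expanding ad(t x + y)^(p-1) = sum over words u in {x,y}^(p-1)
of t^(number of x in u) ad(u_1) ... ad(u_(p-1)); a word is a bool list
(True = x, False = y), and foldr applies ad(u_1) o ... o ad(u_(p-1)).\<close>
definition jacobson_s :: "nat \<Rightarrow> ('k::field \<Rightarrow> 'g::ab_group_add \<Rightarrow> 'g) \<Rightarrow> ('g \<Rightarrow> 'g \<Rightarrow> 'g)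
     \<Rightarrow> nat \<Rightarrow> 'g \<Rightarrow> 'g \<Rightarrow> 'g" where
  "jacobson_s p sc br r x y =
     sc (inverse (of_nat r))
       (\<Sum>u\<in>{u::bool list. length u = p - 1 \<and> length (filter id u) = r - 1}.
          foldr (\<lambda>b v. br (if b then x else y) v) u x)"

definition restricted_lie_algebra ::
  "nat \<Rightarrow> ('k::field \<Rightarrow> 'g::ab_group_add \<Rightarrow> 'g) \<Rightarrow> ('g \<Rightarrow> 'g \<Rightarrow> 'g) \<Rightarrow> ('g \<Rightarrow> 'g) \<Rightarrow> bool" where
  "restricted_lie_algebra p sc br pm \<longleftrightarrow>
     lie_algebra sc br \<and>
     (\<forall>c x. pm (sc c x) = sc (c ^ p) (pm x)) \<and>
     (\<forall>x y. br (pm x) y = ((br x) ^^ p) y) \<and>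
     (\<forall>x y. pm (x + y) = pm x + pm y + (\<Sum>r=1..p-1. jacobson_s p sc br r x y))"

definition restricted_hom ::
  "('k::field \<Rightarrow> 'g::ab_group_add \<Rightarrow> 'g) \<Rightarrow> ('g \<Rightarrow> 'g \<Rightarrow> 'g) \<Rightarrow> ('g \<Rightarrow> 'g)
   \<Rightarrow> ('k \<Rightarrow> 'h::ab_group_add \<Rightarrow> 'h) \<Rightarrow> ('h \<Rightarrow> 'h \<Rightarrow> 'h) \<Rightarrow> ('h \<Rightarrow> 'h)
   \<Rightarrow> ('g \<Rightarrow> 'h) \<Rightarrow> bool" where
  "restricted_hom sc1 br1 pm1 sc2 br2 pm2 f \<longleftrightarrow>
     Vector_Spaces.linear sc1 sc2 f \<and>
     (\<forall>x y. f (br1 x y) = br2 (f x) (f y)) \<and>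
     (\<forall>x. f (pm1 x) = pm2 (f x))"

definition p_closed :: "('k::field \<Rightarrow> 'g::ab_group_add \<Rightarrow> 'g) \<Rightarrow> ('g \<Rightarrow> 'g) \<Rightarrow> 'g \<Rightarrow> bool" where
  "p_closed sc pm x \<longleftrightarrow> x \<noteq> 0 \<and> (\<exists>c. pm x = sc c x)"

text \<open>The semidirect product g = a x| k e, elements (a, lambda) = a + lambda e.\<close>
definition sd_scale :: "('k::field \<Rightarrow> 'a::ab_group_add \<Rightarrow> 'a) \<Rightarrow> 'k \<Rightarrow> 'a \<times> 'k \<Rightarrow> 'a \<times> 'k" where
  "sd_scale sc c v = (sc c (fst v), c * snd v)"

definition sd_bracket :: "('k::field \<Rightarrow> 'a::ab_group_add \<Rightarrow> 'a) \<Rightarrow> 'a \<times> 'k \<Rightarrow> 'a \<times> 'k \<Rightarrow> 'a \<times> 'k" where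
  "sd_bracket sc v w = (sc (snd v) (fst w) - sc (snd w) (fst v), 0)"

definition sd_pmap :: "nat \<Rightarrow> ('k::field \<Rightarrow> 'a::ab_group_add \<Rightarrow> 'a) \<Rightarrow> 'a \<times> 'k \<Rightarrow> 'a \<times> 'k" where
  "sd_pmap p sc v = sd_scale sc (snd v ^ (p - 1)) v"

end

theory Submission
  imports Defs "HOL-Computational_Algebra.Primes"
begin


definition W :: "nat \<Rightarrow> nat \<Rightarrow> bool list set" where
  "W n k = {u. length u = n \<and> length (filter id u) = k}"

lemma finite_W: "finite (W n k)"
proof -
  have "W n k \<subseteq> {xs. set xs \<subseteq> UNIV \<and> length xs = n}" by (auto simp: W_def)
  thus ?thesis using finite_lists_length_eq[of "UNIV::bool set" n] finite_subset by auto
qed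

lemma W_Suc: "W (Suc n) k = Cons False ` W n k \<union> (if k = 0 then {} else Cons True ` W n (k - 1))"
proof (rule set_eqI)
  fix u show "u \<in> W (Suc n) k \<longleftrightarrow> u \<in> Cons False ` W n k \<union> (if k = 0 then {} else Cons True ` W n (k - 1))"
    by (cases u) (auto simp: W_def)
qed

lemma sum_W_Suc: "sum h (W (Suc n) k) = sum (\<lambda>u. h (False # u)) (W n k)
   + (if k = 0 then 0 else sum (\<lambda>u. h (True # u)) (W n (k - 1)))"
proof -
  have d: "Cons False ` W n k \<inter> Cons True ` W n (k - 1) = {}" by auto
  show ?thesis
  proof (cases "k = 0")
    case False
    have "sum h (W (Suc n) k) = sum h (Cons False ` W n k) + sum h (Cons True ` W n (k - 1))"
      unfolding W_Suc using False by (simp only: if_False) (rule sum.union_disjoint, auto simp: finite_W)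
    then show ?thesis using False by (simp add: sum.reindex)
  qed (simp add: W_Suc sum.reindex)
qed

lemma sum_W_prod:
  fixes f :: "bool \<Rightarrow> 'k::comm_semiring_1"
  shows "sum (\<lambda>u. prod_list (map f u)) (W n k) = of_nat (n choose k) * f True ^ k * f False ^ (n - k)"
proof (induction n arbitrary: k)
  case 0
  have "W 0 k = (if k = 0 then {[]} else {})" by (auto simp: W_def)
  then show ?case by (auto simp: binomial_eq_0)
next
  case (Suc n)
  show ?case
  proof (cases k)
    case 0
    then show ?thesis using Suc[of 0] by (simp add: sum_W_Suc sum_distrib_left[symmetric] algebra_simps)
  next
    case (Suc j)
    have e1: "sum (\<lambda>u. prod_list (map f (False # u))) (W n k) = f False * (of_nat (n choose k) * f True ^ k * f False ^ (n - k))"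
      by (simp add: sum_distrib_left[symmetric] Suc.IH[of k])
    have e2: "sum (\<lambda>u. prod_list (map f (True # u))) (W n j) = f True * (of_nat (n choose j) * f True ^ j * f False ^ (n - j))"
      by (simp add: sum_distrib_left[symmetric] Suc.IH[of j])
    have "f False * (of_nat (n choose k) * f True ^ k * f False ^ (n - k)) + f True * (of_nat (n choose j) * f True ^ j * f False ^ (n - j))
       = of_nat (Suc n choose k) * f True ^ k * f False ^ (Suc n - k)"
    proof (cases "k \<le> n")
      case True
      then have "Suc n - k = Suc (n - k)" "n - j = Suc (n - k)" using Suc by auto
      then show ?thesis using Suc by (simp add: algebra_simps)
    next
      case False
      then have "n choose k = 0" by simp
      moreover have "k = Suc n \<or> n < j" using False Suc by auto
      ultimately show ?thesis using Suc by (auto simp: algebra_simps binomial_eq_0)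
    qed
    then show ?thesis using e1 e2 Suc by (simp add: sum_W_Suc)
  qed
qed

lemma sum_W_rev: "sum h (W m k) = sum (\<lambda>u. h (rev u)) (W m k)"
proof -
  have "rev ` W m k = W m k"
  proof
    show "rev ` W m k \<subseteq> W m k" by (auto simp: W_def rev_filter[symmetric])
    show "W m k \<subseteq> rev ` W m k"
    proof
      fix u assume "u \<in> W m k"
      then have "rev u \<in> W m k" by (auto simp: W_def rev_filter[symmetric])
      then show "u \<in> rev ` W m k" by (metis image_eqI rev_rev_ident)
    qed
  qed
  then have "sum h (W m k) = sum h (rev ` W m k)" by simp
  also have "\<dots> = sum (\<lambda>u. h (rev u)) (W m k)" by (simp add: sum.reindex)
  finally show ?thesis .
qed

context vector_space begin

lemma sc_zero_left[simp]: "scale 0 v = 0"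
  by (metis add_cancel_left_left scale_left_distrib add_0)

lemma sc_zero_right[simp]: "scale c 0 = 0"
  by (metis add_cancel_left_left scale_right_distrib add_0)

lemma fold_zero:
  "foldr (\<lambda>b v. sd_bracket scale (if b then x else y) v) u (d, 0)
     = (scale (prod_list (map (\<lambda>b. if b then snd x else snd y) u)) d, 0)"
  by (induction u) (auto simp: sd_bracket_def)

lemma jac:
  assumes "p \<ge> 2"
  shows "jacobson_s p (sd_scale scale) (sd_bracket scale) r x y
    = (scale (inverse (of_nat r) * (of_nat ((p-2) choose (r-1)) * snd x ^ (r-1) * snd y ^ (p-2-(r-1))))
         (scale (snd y) (fst x) - scale (snd x) (fst y)), 0)"
proof -
  define F where "F = (\<lambda>b v. sd_bracket scale (if b then x else y) v)"
  define g where "g = (\<lambda>b. if b then snd x else snd y)"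
  define d where "d = scale (snd y) (fst x) - scale (snd x) (fst y)"
  obtain n where n: "p - 1 = Suc n" "n = p - 2" using assms by (cases p) auto
  have set: "{u::bool list. length u = p - 1 \<and> length (filter id u) = r - 1} = W (Suc n) (r - 1)"
    using n by (simp add: W_def)
  have Ff: "F False x = (d, 0)" by (simp add: F_def sd_bracket_def d_def)
  have Ft: "F True x = (0, 0)" by (simp add: F_def sd_bracket_def)
  have "sum (\<lambda>u. foldr F u x) (W (Suc n) (r - 1)) = sum (\<lambda>u. foldr F (rev u) x) (W (Suc n) (r - 1))"
    by (rule sum_W_rev)
  also have "\<dots> = sum (\<lambda>u. (scale (prod_list (map g u)) d, 0)) (W n (r - 1))"
  proof -
    have fz: "foldr F u (e, 0) = (scale (prod_list (map g u)) e, 0)" for u e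
      unfolding F_def g_def by (rule fold_zero)
    have fz0: "foldr F u 0 = 0" for u using fz[of u 0] by (simp add: zero_prod_def)
    show ?thesis
      by (simp add: sum_W_Suc Ff Ft fz fz0 prod_list.rev rev_map[symmetric] zero_prod_def[symmetric])
  qed
  also have "\<dots> = (scale (sum (\<lambda>u. prod_list (map g u)) (W n (r - 1))) d, 0)"
    by (simp add: prod_eq_iff fst_sum snd_sum scale_sum_left)
  also have "sum (\<lambda>u. prod_list (map g u)) (W n (r - 1)) = of_nat (n choose (r-1)) * snd x ^ (r-1) * snd y ^ (n-(r-1))"
    by (simp add: sum_W_prod g_def)
  finally show ?thesis unfolding jacobson_s_def set F_def[symmetric]
    by (simp add: sd_scale_def n d_def)
qed

end



lemma coef_id:
  assumes ch: "CHAR('k::field) = p" and p2: "p \<ge> 2" and r: "1 \<le> r" "r \<le> p - 1"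
  shows "inverse (of_nat r) * (of_nat ((p-2) choose (r-1)) :: 'k) = - of_nat ((p-1) choose r)"
proof -
  have "Suc (p-2) * ((p-2) choose (r-1)) = (Suc (p-2) choose Suc (r-1)) * Suc (r-1)"
    by (rule Suc_times_binomial_eq)
  moreover have "Suc (p-2) = p - 1" "Suc (r-1) = r" using p2 r by auto
  ultimately have e: "(p - 1) * ((p-2) choose (r-1)) = ((p-1) choose r) * r" by simp
  have "(of_nat ((p - 1) * ((p-2) choose (r-1))) :: 'k) = (of_nat p - 1) * of_nat ((p-2) choose (r-1))"
    using p2 by (simp add: of_nat_diff)
  also have "(of_nat p :: 'k) = 0" using ch by (metis of_nat_CHAR)
  finally have "- (of_nat ((p-2) choose (r-1)) :: 'k) = of_nat ((p-1) choose r) * of_nat r"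
    using e by (metis of_nat_mult mult_minus1 add_0 diff_0 mult_minus_left)
  moreover have "(of_nat r :: 'k) \<noteq> 0"
  proof
    assume "(of_nat r :: 'k) = 0"
    then have "p dvd r" using ch by (simp add: of_nat_eq_0_iff_char_dvd)
    then show False using r p2 by (auto dest: dvd_imp_le)
  qed
  ultimately show ?thesis by (simp add: field_simps) (metis add.inverse_inverse mult.commute)
qed

lemma scal_ids:
  fixes l m :: "'k::field"
  assumes ch: "CHAR('k) = p" and p2: "p \<ge> 2"
  defines "C \<equiv> (\<Sum>r=1..p-1. inverse (of_nat r) * (of_nat ((p-2) choose (r-1)) * l^(r-1) * m^(p-2-(r-1))))"
  shows "(l+m)^(p-1) = l^(p-1) + m*C \<and> (l+m)^(p-1) = m^(p-1) - l*C"
proof -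
  define S where "S = (\<Sum>r=1..p-1. of_nat ((p-1) choose r) * l^(r-1) * m^(p-1-r) :: 'k)"
  have CS: "C = - S"
    unfolding C_def S_def sum_negf[symmetric]
  proof (rule sum.cong)
    fix r assume "r \<in> {1..p-1}"
    then have r: "1 \<le> r" "r \<le> p - 1" by auto
    have "p-2-(r-1) = p-1-r" using r by simp
    then show "inverse (of_nat r) * (of_nat ((p-2) choose (r-1)) * l^(r-1) * m^(p-2-(r-1)))
       = - (of_nat ((p-1) choose r) * l^(r-1) * m^(p-1-r))"
      using coef_id[OF ch p2 r] by (simp add: mult.assoc[symmetric])
  qed simp
  define T where "T = (l+m)^(p-1)"
  have pr: "prime CHAR('k)" using ch p2 prime_CHAR_semidom[where 'a='k] by auto
  have p0: "(of_nat p :: 'k) = 0" using ch by (metis of_nat_CHAR)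
  have frob: "(l+m)^p = l^p + m^p" using freshmans_dream[OF pr ch[symmetric]] .
  have Tb: "T = (\<Sum>k\<le>p-1. of_nat ((p-1) choose k) * l^k * m^(p-1-k))"
    unfolding T_def by (rule binomial_ring)
  also have "\<dots> = m^(p-1) + (\<Sum>k=1..p-1. of_nat ((p-1) choose k) * l^k * m^(p-1-k))"
    by (simp add: atMost_atLeast0 sum.atLeast_Suc_atMost)
  also have "(\<Sum>k=1..p-1. of_nat ((p-1) choose k) * l^k * m^(p-1-k)) = l * S"
    unfolding S_def sum_distrib_left
  proof (rule sum.cong)
    fix r assume "r \<in> {1..p-1}"
    then have "l^r = l * l^(r-1)" by (cases r) auto
    then show "of_nat ((p-1) choose r) * l^r * m^(p-1-r) = l * (of_nat ((p-1) choose r) * l^(r-1) * m^(p-1-r))"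
      by simp
  qed simp
  finally have lS: "T = m^(p-1) + l * S" .
  have mS: "T = l^(p-1) - m * S"
  proof (cases "l = 0")
    case True
    have "S = of_nat ((p-1) choose 1) * m^(p-2) + (\<Sum>r=2..p-1. of_nat ((p-1) choose r) * l^(r-1) * m^(p-1-r))"
      unfolding S_def using p2 by (simp add: sum.atLeast_Suc_atMost numeral_2_eq_2)
    also have "(\<Sum>r=2..p-1. of_nat ((p-1) choose r) * l^(r-1) * m^(p-1-r)) = 0"
      using True by (intro sum.neutral) auto
    finally have "S = (of_nat p - 1) * m^(p-2)" using p2 by (simp add: of_nat_diff)
    then have "m * S = -(m^(p-1))" using p0 p2
      by (simp) (metis Suc_diff_Suc numeral_2_eq_2 power_Suc Suc_1 diff_Suc_1 le_add_diff_inverse2 less_eq_Suc_le plus_1_eq_Suc)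
    moreover have "T = m^(p-1)" unfolding T_def using True by simp
    moreover have "l^(p-1) = 0" using True p2 by simp
    ultimately show ?thesis by simp
  next
    case False
    have pe: "x^p = x * x^(p-1)" for x :: 'k using p2 by (metis Suc_diff_1 le_trans one_le_numeral power_Suc zero_less_one less_le_trans one_less_numeral_iff semiring_norm(76) linorder_not_le not_one_le_zero)
    have "(l+m) * T = l^p + m^p" unfolding T_def using frob pe[of "l+m"] by simp
    then have "(l+m) * (l * S) = l^p + m^p - (l+m) * m^(p-1)" using lS by (simp add: algebra_simps)
    also have "\<dots> = l * (l^(p-1) - m^(p-1))" using pe[of l] pe[of m] by (simp add: algebra_simps)
    finally have "l * ((l+m) * S) = l * (l^(p-1) - m^(p-1))" by (simp add: algebra_simps)
    then have "(l+m) * S = l^(p-1) - m^(p-1)" using False by simp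
    then show ?thesis using lS by (simp add: algebra_simps)
  qed
  show ?thesis using lS mS CS unfolding T_def by simp
qed



context vector_space begin

lemma sd_vs: "vector_space (sd_scale scale)"
  by unfold_locales (auto simp: sd_scale_def scale_right_distrib scale_left_distrib algebra_simps)

lemma sd_lie: "lie_algebra (sd_scale scale) (sd_bracket scale)"
  unfolding lie_algebra_def
  by (auto simp: sd_vs sd_scale_def sd_bracket_def algebra_simps scale_right_diff_distrib zero_prod_def)

lemma ad_pow: "((sd_bracket scale x) ^^ Suc n) y = (scale (snd x ^ n) (fst (sd_bracket scale x y)), 0)"
  by (induction n) (auto simp: sd_bracket_def scale_right_diff_distrib mult.assoc)

lemma sd_jacobson:
  assumes ch: "CHAR('a) = p" and p2: "p \<ge> 2"
  shows "sd_pmap p scale (x + y) = sd_pmap p scale x + sd_pmap p scale y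
     + (\<Sum>r=1..p-1. jacobson_s p (sd_scale scale) (sd_bracket scale) r x y)"
proof -
  obtain a l b m where x: "x = (a, l)" and y: "y = (b, m)" by (cases x, cases y)
  define C where "C \<equiv> (\<Sum>r=1..p-1. inverse (of_nat r) * (of_nat ((p-2) choose (r-1)) * l^(r-1) * m^(p-2-(r-1))))"
  define d where "d = scale m a - scale l b"
  have J: "(\<Sum>r=1..p-1. jacobson_s p (sd_scale scale) (sd_bracket scale) r x y) = (scale C d, 0)"
    by (simp add: jac[OF p2] x y C_def d_def prod_eq_iff fst_sum snd_sum scale_sum_left)
  have ids: "(l+m)^(p-1) = l^(p-1) + m*C" "(l+m)^(p-1) = m^(p-1) - l*C"
    using scal_ids[OF ch p2, of l m] unfolding C_def by auto
  have pr: "prime CHAR('a)" using ch p2 prime_CHAR_semidom[where 'a='a] by auto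
  have pe: "z^p = z^(p-1) * z" for z :: 'a using p2 by (metis Suc_diff_1 not_one_le_zero not_gr0 power_Suc2 le_trans one_le_numeral)
  have frob: "(l+m)^p = l^p + m^p" using freshmans_dream[OF pr ch[symmetric]] .
  have f1: "scale ((l+m)^(p-1)) (a + b) = scale (l^(p-1)) a + scale (m^(p-1)) b + scale C d"
  proof -
    have "scale ((l+m)^(p-1)) (a + b) = scale ((l+m)^(p-1)) a + scale ((l+m)^(p-1)) b"
      by (simp add: scale_right_distrib)
    also have "\<dots> = scale (l^(p-1) + m*C) a + scale (m^(p-1) - l*C) b"
      using ids by simp
    finally show ?thesis
      by (simp add: d_def scale_left_distrib scale_left_diff_distrib scale_right_diff_distrib algebra_simps)
  qed
  have f2: "(l+m)^(p-1) * (l+m) = l^(p-1) * l + m^(p-1) * m"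
    using frob pe[of "l+m"] pe[of l] pe[of m] by simp
  show ?thesis
    unfolding J using f1 f2 by (simp add: x y sd_pmap_def sd_scale_def)
qed

end



theorem proposition1p1:
  fixes sc :: "'k::field \<Rightarrow> 'a::ab_group_add \<Rightarrow> 'a" and B :: "'a set" and p :: nat
  assumes char: "CHAR('k) = p" and ppos: "p > 0"
    and fd: "finite_dimensional_vector_space sc B"
  defines "ia \<equiv> (\<lambda>a::'a. (a, 0::'k))" and "ib \<equiv> (\<lambda>c::'k. (0::'a, c))"
  shows
    "restricted_lie_algebra p (sd_scale sc) (sd_bracket sc) (sd_pmap p sc)
     \<and> restricted_hom sc (\<lambda>_ _. 0) (\<lambda>_. 0) (sd_scale sc) (sd_bracket sc) (sd_pmap p sc) ia
     \<and> restricted_hom (*) (\<lambda>_ _. 0) (\<lambda>c. c ^ p) (sd_scale sc) (sd_bracket sc) (sd_pmap p sc) ib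
     \<and> (\<forall>pm. restricted_lie_algebra p (sd_scale sc) (sd_bracket sc) pm
             \<and> restricted_hom sc (\<lambda>_ _. 0) (\<lambda>_. 0) (sd_scale sc) (sd_bracket sc) pm ia
             \<and> restricted_hom (*) (\<lambda>_ _. 0) (\<lambda>c. c ^ p) (sd_scale sc) (sd_bracket sc) pm ib
             \<longrightarrow> pm = sd_pmap p sc)
     \<and> (\<forall>x. x \<noteq> 0 \<longrightarrow> p_closed (sd_scale sc) (sd_pmap p sc) x)"
proof -
  have vs: "vector_space sc" using fd by (rule finite_dimensional_vector_space.axioms(1))
  interpret vs: vector_space sc by (rule vs)
  have pr: "prime CHAR('k)" using char ppos prime_CHAR_semidom[where 'a='k] by auto
  then have p2: "p \<ge> 2" using char prime_ge_2_nat by auto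
  have pe: "z^p = z^(p-1) * z" for z :: 'k using p2
    by (metis Suc_diff_1 not_one_le_zero not_gr0 power_Suc2 le_trans one_le_numeral)
  have p1: "p - 1 \<noteq> 0" using p2 by simp
  have vsk: "vector_space ((*) :: 'k \<Rightarrow> 'k \<Rightarrow> 'k)"
    by unfold_locales (auto simp: algebra_simps)
  have J: "\<And>x y. sd_pmap p sc (x + y) = sd_pmap p sc x + sd_pmap p sc y
     + (\<Sum>r=1..p-1. jacobson_s p (sd_scale sc) (sd_bracket sc) r x y)"
    by (rule vs.sd_jacobson[OF char p2])
  have R: "restricted_lie_algebra p (sd_scale sc) (sd_bracket sc) (sd_pmap p sc)"
    unfolding restricted_lie_algebra_def
  proof (intro conjI allI)
    show "lie_algebra (sd_scale sc) (sd_bracket sc)" by (rule vs.sd_lie)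
  next
    fix c x
    show "sd_pmap p sc (sd_scale sc c x) = sd_scale sc (c ^ p) (sd_pmap p sc x)"
      by (simp add: sd_pmap_def sd_scale_def pe[of c] power_mult_distrib algebra_simps)
  next
    fix x y :: "'a \<times> 'k"
    have "(sd_bracket sc x ^^ p) y = (sd_bracket sc x ^^ Suc (p-1)) y" using p2 by simp
    also have "\<dots> = (sc (snd x ^ (p-1)) (fst (sd_bracket sc x y)), 0)" by (rule vs.ad_pow)
    finally show "sd_bracket sc (sd_pmap p sc x) y = (sd_bracket sc x ^^ p) y"
      by (simp add: sd_pmap_def sd_scale_def sd_bracket_def vs.scale_right_diff_distrib algebra_simps)
  next
    fix x y
    show "sd_pmap p sc (x + y) = sd_pmap p sc x + sd_pmap p sc y
       + (\<Sum>r=1..p-1. jacobson_s p (sd_scale sc) (sd_bracket sc) r x y)" by (rule J)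
  qed
  have Ha: "restricted_hom sc (\<lambda>_ _. 0) (\<lambda>_. 0) (sd_scale sc) (sd_bracket sc) (sd_pmap p sc) ia"
    unfolding restricted_hom_def Vector_Spaces.linear_iff
    using vs vs.sd_vs p1
    by (auto simp: ia_def sd_scale_def sd_bracket_def sd_pmap_def zero_prod_def)
  have Hb: "restricted_hom (*) (\<lambda>_ _. 0) (\<lambda>c. c ^ p) (sd_scale sc) (sd_bracket sc) (sd_pmap p sc) ib"
    unfolding restricted_hom_def Vector_Spaces.linear_iff
    using vsk vs.sd_vs p1
    by (auto simp: ib_def sd_scale_def sd_bracket_def sd_pmap_def zero_prod_def pe)
  have U: "pm = sd_pmap p sc" if
    "restricted_lie_algebra p (sd_scale sc) (sd_bracket sc) pm"
    "restricted_hom sc (\<lambda>_ _. 0) (\<lambda>_. 0) (sd_scale sc) (sd_bracket sc) pm ia"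
    "restricted_hom (*) (\<lambda>_ _. 0) (\<lambda>c. c ^ p) (sd_scale sc) (sd_bracket sc) pm ib" for pm
  proof
    fix x :: "'a \<times> 'k"
    obtain a l where x: "x = (a, l)" by (cases x)
    have s: "x = ia a + ib l" by (simp add: x ia_def ib_def)
    have Jpm: "pm (ia a + ib l) = pm (ia a) + pm (ib l)
       + (\<Sum>r=1..p-1. jacobson_s p (sd_scale sc) (sd_bracket sc) r (ia a) (ib l))"
      using that(1) unfolding restricted_lie_algebra_def by blast
    have "pm (ia a) = ia 0" using that(2) unfolding restricted_hom_def by metis
    also have "\<dots> = sd_pmap p sc (ia a)" using p1 by (simp add: ia_def sd_pmap_def sd_scale_def)
    finally have e1: "pm (ia a) = sd_pmap p sc (ia a)" .
    have "pm (ib l) = ib (l ^ p)" using that(3) unfolding restricted_hom_def by metis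
    also have "\<dots> = sd_pmap p sc (ib l)" by (simp add: ib_def sd_pmap_def sd_scale_def pe)
    finally have e2: "pm (ib l) = sd_pmap p sc (ib l)" .
    show "pm x = sd_pmap p sc x" unfolding s Jpm J e1 e2 ..
  qed
  have P: "p_closed (sd_scale sc) (sd_pmap p sc) x" if "x \<noteq> 0" for x
    unfolding p_closed_def using that by (auto simp: sd_pmap_def)
  show ?thesis using R Ha Hb U P by blast
qed


end
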